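(* Assume the standing assumptions (P1)–(P6) described in the context. Let $(f_0,t_0)\in\mathrm{Dom}\,\mathcal P$ and suppose the Volterra problem VP$(f_0,t_0)$ has two solutions $\varphi\in C([t_0,T),F)$ and $\varphi'\in C([t_0,T'),F)$. Then $\varphi(t)=\varphi'(t)$ for all $t\in[t_0,\min(T,T'))$.
   Context: All Banach spaces are over a common field ($\mathbb R$ or $\mathbb C$). For Banach spaces $X,Y$, $X\hookrightarrow Y$ means that $X$ is a dense linear subspace of $Y$ and the inclusion is continuous. Standing assumptions: (P1) $F_+,F,F_-$ are Banach spaces with norms $\|\cdot\|_+,\|\cdot\|,\|\cdot\|_-$ and $F_+\hookrightarrow F\hookrightarrow F_-$; $B(f_0,r):=\{f\in F:\|f-f_0\|<r\}$. (P2) $\mathcal A:F_+\to F_-$ is linear and on $F_+$ the norm $\|\cdot\|_+$ is equivalent to $f\mapsto\|f\|_-+\|\mathcal Af\|_-$. (P3) $\mathcal A$, viewed as a densely defined operator in $F_-$ with domain $F_+$, generates a strongly continuous semigroup $(e^{t\mathcal A})_{t\ge0}$ on $F_-$. (P4) $e^{t\mathcal A}(F)\subset F$ for $t\ge0$, $(f,t)\mapsto e^{t\mathcal A}f$ is continuous from $F\times[0,\infty)$ to $F$, and $u\in C([0,\infty),(0,\infty))$ satisfies $\|e^{t\mathcal A}f\|\le u(t)\|f\|$. (P5) $e^{t\mathcal A}(F_-)\subset F$ for $t>0$, $(f,t)\mapsto e^{t\mathcal A}f$ is continuous from $F_-\times(0,\infty)$ to $F$, and $u_-\in C((0,\infty),(0,\infty))$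 satisfies $\|e^{t\mathcal A}f\|\le u_-(t)\|f\|_-$ for $t>0$, $f\in F_-$, with $u_-(t)=O(t^{-(1-\sigma)})$ as $t\to0^+$ for some $\sigma\in(0,1]$. (P6) $\mathcal P:\mathrm{Dom}\,\mathcal P\subset F\times\mathbb R\to F_-$; the domain is semi-open (for each $(f_0,t_0)\in\mathrm{Dom}\,\mathcal P$ there are $\delta,r\in(0,+\infty]$ with $B(f_0,r)\times[t_0,t_0+\delta)\subset\mathrm{Dom}\,\mathcal P$), and for every closed bounded $\mathcal C\subset F\times\mathbb R$ with $\mathcal C\subset\mathrm{Dom}\,\mathcal P$ there are $L,M\ge0$ with $\|\mathcal P(f,t)-\mathcal P(f',t')\|_-\le L\|f-f'\|+M|t-t'|$ on $\mathcal C$. A solution of the Volterra problem VP$(f_0,t_0)$ on $[t_0,T)$ ($T\in(t_0,+\infty]$) is a $\varphi\in C([t_0,T),F)$ whose graph $\{(\varphi(t),t)\}$ lies in $\mathrm{Dom}\,\mathcal P$ and with $\varphi(t)=e^{(t-t_0)\mathcal A}f_0+\int_{t_0}^te^{(t-s)\mathcal A}\mathcal P(\varphi(s),s)\,ds$ for all $t\in[t_0,T)$. *)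

theory Defs
  imports "HOL-Analysis.Analysis" "HOL-Library.Landau_Symbols"
begin

text \<open>Model: F_- is a Banach type 'm, F is a Banach type 'f, F_+ is a Banach type 'p;
  the continuous dense inclusions are injective bounded linear maps
  i :: 'f \<Rightarrow> 'm (F into F_-) and j :: 'p \<Rightarrow> 'f (F_+ into F).\<close>

definition dense_embedding :: "('a::real_normed_vector \<Rightarrow> 'b::real_normed_vector) \<Rightarrow> bool" where
  "dense_embedding i \<longleftrightarrow> bounded_linear i \<and> inj i \<and> closure (range i) = UNIV"

definition P1 :: "('f::banach \<Rightarrow> 'm::banach) \<Rightarrow> ('p::banach \<Rightarrow> 'f) \<Rightarrow> bool" where
  "P1 i j \<longleftrightarrow> dense_embedding i \<and> dense_embedding j"

definition P2 :: "('f::banach \<Rightarrow> 'm::banach) \<Rightarrow> ('p::banach \<Rightarrow> 'f) \<Rightarrow> ('p \<Rightarrow> 'm) \<Rightarrow> bool" where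
  "P2 i j A \<longleftrightarrow> linear A \<and>
     (\<exists>c C. 0 < c \<and> 0 < C \<and>
        (\<forall>p. c * norm p \<le> norm (i (j p)) + norm (A p)
            \<and> norm (i (j p)) + norm (A p) \<le> C * norm p))"

definition strongly_continuous_semigroup :: "(real \<Rightarrow> 'm::banach \<Rightarrow> 'm) \<Rightarrow> bool" where
  "strongly_continuous_semigroup S \<longleftrightarrow>
     (\<forall>t\<ge>0. bounded_linear (S t)) \<and> S 0 = id \<and>
     (\<forall>t\<ge>0. \<forall>s\<ge>0. S (t + s) = S t \<circ> S s) \<and>
     (\<forall>x. continuous_on {0..} (\<lambda>t. S t x))"

text \<open>The infinitesimal generator of S is the operator A with domain D (given as the
  injective parametrisation E :: 'p \<Rightarrow> 'm of the domain), i.e. the domain of the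
  generator is exactly range E and the generator maps E p to A p.\<close>
definition generates :: "('p \<Rightarrow> 'm::banach) \<Rightarrow> ('p \<Rightarrow> 'm) \<Rightarrow> (real \<Rightarrow> 'm \<Rightarrow> 'm) \<Rightarrow> bool" where
  "generates E A S \<longleftrightarrow> strongly_continuous_semigroup S \<and>
     (\<forall>x. (\<exists>y. ((\<lambda>h. inverse h *\<^sub>R (S h x - x)) \<longlongrightarrow> y) (at_right 0)) \<longleftrightarrow> x \<in> range E) \<and>
     (\<forall>p. ((\<lambda>h. inverse h *\<^sub>R (S h (E p) - E p)) \<longlongrightarrow> A p) (at_right 0))"

definition P3 :: "('f::banach \<Rightarrow> 'm::banach) \<Rightarrow> ('p::banach \<Rightarrow> 'f) \<Rightarrow> ('p \<Rightarrow> 'm) \<Rightarrow> (real \<Rightarrow> 'm \<Rightarrow> 'm) \<Rightarrow> bool" where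
  "P3 i j A S \<longleftrightarrow> generates (i \<circ> j) A S"

text \<open>(P4): restriction of the semigroup to F, read back in F via inv i.\<close>
definition P4 :: "('f::banach \<Rightarrow> 'm::banach) \<Rightarrow> (real \<Rightarrow> 'm \<Rightarrow> 'm) \<Rightarrow> (real \<Rightarrow> real) \<Rightarrow> bool" where
  "P4 i S u \<longleftrightarrow>
     (\<forall>t\<ge>0. \<forall>f. S t (i f) \<in> range i) \<and>
     continuous_on (UNIV \<times> {0..}) (\<lambda>(f, t). inv i (S t (i f))) \<and>
     continuous_on {0..} u \<and> (\<forall>t\<ge>0. 0 < u t) \<and>
     (\<forall>t\<ge>0. \<forall>f. norm (inv i (S t (i f))) \<le> u t * norm f)"

definition P5 :: "('f::banach \<Rightarrow> 'm::banach) \<Rightarrow> (real \<Rightarrow> 'm \<Rightarrow> 'm) \<Rightarrow> (real \<Rightarrow> real) \<Rightarrow> real \<Rightarrow> bool" where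
  "P5 i S um \<sigma> \<longleftrightarrow>
     (\<forall>t>0. \<forall>x. S t x \<in> range i) \<and>
     continuous_on (UNIV \<times> {0<..}) (\<lambda>(x, t). inv i (S t x)) \<and>
     continuous_on {0<..} um \<and> (\<forall>t>0. 0 < um t) \<and>
     (\<forall>t>0. \<forall>x. norm (inv i (S t x)) \<le> um t * norm x) \<and>
     0 < \<sigma> \<and> \<sigma> \<le> 1 \<and>
     um \<in> O[at_right 0](\<lambda>t. t powr (-(1 - \<sigma>)))"

definition P6 :: "('f::banach \<times> real \<Rightarrow> 'm::banach) \<Rightarrow> ('f \<times> real) set \<Rightarrow> bool" where
  "P6 P Dom \<longleftrightarrow>
     (\<forall>f0 t0. (f0, t0) \<in> Dom \<longrightarrow>
        (\<exists>\<delta> r. 0 < \<delta> \<and> 0 < r \<and> ball f0 r \<times> {t0..<t0 + \<delta>} \<subseteq> Dom)) \<and>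
     (\<forall>C. closed C \<and> bounded C \<and> C \<subseteq> Dom \<longrightarrow>
        (\<exists>L M. 0 \<le> L \<and> 0 \<le> M \<and>
           (\<forall>f t f' t'. (f, t) \<in> C \<longrightarrow> (f', t') \<in> C \<longrightarrow>
              norm (P (f, t) - P (f', t')) \<le> L * norm (f - f') + M * \<bar>t - t'\<bar>)))"

text \<open>The Volterra equation is read in F_-
  (i.e. after the inclusion i), the integral being the (Henstock-Kurzweil = Riemann here)
  integral of an F_- valued function, required to exist.\<close>
definition VP_solution ::
  "('f::banach \<Rightarrow> 'm::banach) \<Rightarrow> (real \<Rightarrow> 'm \<Rightarrow> 'm) \<Rightarrow> ('f \<times> real \<Rightarrow> 'm) \<Rightarrow> ('f \<times> real) set
   \<Rightarrow> 'f \<Rightarrow> real \<Rightarrow> ereal \<Rightarrow> (real \<Rightarrow> 'f) \<Rightarrow> bool" where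
  "VP_solution i S P Dom f0 t0 T \<phi> \<longleftrightarrow>
     ereal t0 < T \<and>
     continuous_on {t. t0 \<le> t \<and> ereal t < T} \<phi> \<and>
     (\<forall>t. t0 \<le> t \<and> ereal t < T \<longrightarrow> (\<phi> t, t) \<in> Dom) \<and>
     (\<forall>t. t0 \<le> t \<and> ereal t < T \<longrightarrow>
        ((\<lambda>s. S (t - s) (P (\<phi> s, s))) has_integral (i (\<phi> t) - S (t - t0) (i f0))) {t0..t})"

end

theory Submission imports Defs "HOL-Real_Asymp.Real_Asymp" begin

lemma powint:
  fixes c e t \<sigma> :: real
  assumes "c \<le> e" "e < t" "0 < \<sigma>"
  shows "((\<lambda>s. (t - s) powr (\<sigma> - 1)) has_integral ((t - c) powr \<sigma> - (t - e) powr \<sigma>) / \<sigma>) {c..e}"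
proof -
  define G where "G = (\<lambda>s::real. 0 - ((t - s) powr \<sigma>) / \<sigma>)"
  have "((\<lambda>s. (t - s) powr (\<sigma> - 1)) has_integral (G e - G c)) {c..e}"
  proof (rule fundamental_theorem_of_calculus[OF assms(1)])
    fix x assume x: "x \<in> {c..e}"
    hence "0 < t - x" using assms by auto
    have "(G has_real_derivative (t - x) powr (\<sigma> - 1)) (at x)"
      unfolding G_def using \<open>0 < t - x\<close> assms(3)
      by (auto intro!: derivative_eq_intros simp: field_simps)
    thus "(G has_vector_derivative (t - x) powr (\<sigma> - 1)) (at x within {c..e})"
      using has_real_derivative_iff_has_vector_derivative has_vector_derivative_at_within by blast
  qed
  thus ?thesis by (simp add: G_def field_simps diff_divide_distrib)
qed

lemma normint:
  fixes h :: "real \<Rightarrow> 'f::banach"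
  assumes "a \<le> c" "c \<le> e" "e < t" "0 < \<sigma>"
   and hc: "continuous_on {a..<t} h"
   and hb: "\<And>s. s \<in> {a..<t} \<Longrightarrow> norm (h s) \<le> B * (t - s) powr (\<sigma> - 1)"
  shows "h integrable_on {c..e}"
    and "norm (integral {c..e} h) \<le> B * (((t - c) powr \<sigma> - (t - e) powr \<sigma>) / \<sigma>)"
proof -
  have sub: "{c..e} \<subseteq> {a..<t}" using assms by auto
  show hi: "h integrable_on {c..e}"
    by (rule integrable_continuous_interval, rule continuous_on_subset[OF hc sub])
  have pi: "((\<lambda>s. B * (t - s) powr (\<sigma> - 1)) has_integral B * (((t - c) powr \<sigma> - (t - e) powr \<sigma>) / \<sigma>)) {c..e}"
    using has_integral_mult_right[OF powint[OF assms(2,3,4)]] by simp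
  have "norm (integral {c..e} h) \<le> integral {c..e} (\<lambda>s. B * (t - s) powr (\<sigma> - 1))"
    by (rule integral_norm_bound_integral[OF hi]) (use pi sub hb in auto)
  thus "norm (integral {c..e} h) \<le> B * (((t - c) powr \<sigma> - (t - e) powr \<sigma>) / \<sigma>)"
    using integral_unique[OF pi] by simp
qed

lemma core:
  fixes i :: "'f::banach \<Rightarrow> 'm::banach" and h :: "real \<Rightarrow> 'f" and F :: "real \<Rightarrow> 'm"
  assumes bl: "bounded_linear i" and inj: "inj i"
   and at: "a < t" and sig: "0 < \<sigma>" and B: "0 \<le> B"
   and Fint: "(F has_integral y) {a..t}"
   and hc: "continuous_on {a..<t} h"
   and hF: "\<And>s. s \<in> {a..<t} \<Longrightarrow> i (h s) = F s"
   and hb: "\<And>s. s \<in> {a..<t} \<Longrightarrow> norm (h s) \<le> B * (t - s) powr (\<sigma> - 1)"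
  shows "\<exists>x. i x = y \<and> norm x \<le> B * (t - a) powr \<sigma> / \<sigma>"
proof -
  define c where "c = (\<lambda>n::nat. t - (t - a) / (real n + 1))"
  define x where "x = (\<lambda>n. integral {a..c n} h)"
  have tc: "t - c n = (t - a) / (real n + 1)" for n unfolding c_def by simp
  have tcpos: "0 < t - c n" for n unfolding tc using at by auto
  have ca: "a \<le> c n" for n
  proof -
    have "(t - a) / (real n + 1) \<le> t - a" using at by (simp add: divide_le_eq)
    thus ?thesis unfolding c_def by simp
  qed
  have cmono: "c n \<le> c m" if "n \<le> m" for n m
  proof -
    have "(t - a) / (real m + 1) \<le> (t - a) / (real n + 1)"
      using at that by (intro divide_left_mono) auto
    thus ?thesis unfolding c_def by simp
  qed
  have ct: "c \<longlonglongrightarrow> t"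
  proof -
    have "(\<lambda>n. (t - a) / (real n + 1)) \<longlonglongrightarrow> 0"
      by (intro tendsto_divide_0[OF tendsto_const]) real_asymp
    from tendsto_diff[OF tendsto_const[of t] this] show ?thesis unfolding c_def by simp
  qed
  have tc0: "(\<lambda>n. B * ((t - c n) powr \<sigma> / \<sigma>)) \<longlonglongrightarrow> 0"
  proof -
    have "(\<lambda>n. t - c n) \<longlonglongrightarrow> 0" using tendsto_diff[OF tendsto_const[of t] ct] by simp
    hence "(\<lambda>n. (t - c n) powr \<sigma>) \<longlonglongrightarrow> 0 powr \<sigma>"
      using sig tcpos by (intro tendsto_powr') (auto intro: always_eventually less_imp_le)
    hence "(\<lambda>n. B * ((t - c n) powr \<sigma> / \<sigma>)) \<longlonglongrightarrow> B * (0 powr \<sigma> / \<sigma>)"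
      by (intro tendsto_mult tendsto_divide tendsto_const) (use sig in auto)
    thus ?thesis by simp
  qed
  have xb: "norm (x n) \<le> B * (t - a) powr \<sigma> / \<sigma>" for n
  proof -
    have "norm (x n) \<le> B * (((t - a) powr \<sigma> - (t - c n) powr \<sigma>) / \<sigma>)"
      unfolding x_def using normint(2)[OF order_refl ca _ sig hc hb, of n] tcpos[of n] by auto
    also have "\<dots> \<le> B * ((t - a) powr \<sigma> / \<sigma>)"
      using B sig by (intro mult_left_mono divide_right_mono) auto
    finally show ?thesis by simp
  qed
  have xd: "norm (x m - x n) \<le> B * ((t - c n) powr \<sigma> / \<sigma>)" if "n \<le> m" for n m
  proof -
    have i1: "h integrable_on {a..c m}" using normint(1)[OF order_refl ca _ sig hc hb, of m] tcpos[of m] by auto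
    have "x m = integral {a..c n} h + integral {c n..c m} h"
      unfolding x_def by (rule Henstock_Kurzweil_Integration.integral_combine[symmetric, OF ca cmono[OF that] i1])
    hence "x m - x n = integral {c n..c m} h" unfolding x_def by simp
    hence "norm (x m - x n) \<le> B * (((t - c n) powr \<sigma> - (t - c m) powr \<sigma>) / \<sigma>)"
      using normint(2)[OF ca cmono[OF that] _ sig hc hb] tcpos[of m] by auto
    also have "\<dots> \<le> B * ((t - c n) powr \<sigma> / \<sigma>)"
      using B sig by (intro mult_left_mono divide_right_mono) auto
    finally show ?thesis .
  qed
  have "Cauchy x"
  proof (rule metric_CauchyI)
    fix e :: real assume "0 < e"
    from tc0 have "eventually (\<lambda>n. dist (B * ((t - c n) powr \<sigma> / \<sigma>)) 0 < e) sequentially"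
      using \<open>0 < e\<close> tendstoD by blast
    then obtain M where M: "\<And>n. n \<ge> M \<Longrightarrow> B * ((t - c n) powr \<sigma> / \<sigma>) < e"
      unfolding eventually_sequentially dist_real_def by (metis abs_ge_self diff_zero le_less_trans)
    show "\<exists>M. \<forall>m\<ge>M. \<forall>n\<ge>M. dist (x m) (x n) < e"
    proof (intro exI allI impI)
      fix m n assume "m \<ge> M" "n \<ge> M"
      show "dist (x m) (x n) < e"
      proof (cases "n \<le> m")
        case True
        thus ?thesis using xd[OF True] M[OF \<open>n \<ge> M\<close>] by (simp add: dist_norm)
      next
        case False
        hence "m \<le> n" by simp
        thus ?thesis using xd[OF \<open>m \<le> n\<close>] M[OF \<open>m \<ge> M\<close>] by (simp add: dist_norm norm_minus_commute)
      qed
    qed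
  qed
  then obtain z where xz: "x \<longlonglongrightarrow> z" using Cauchy_convergent_iff convergent_def by blast
  have Fi: "F integrable_on {a..t}" using Fint by blast
  have ix: "i (x n) = integral {a..c n} F" for n
  proof -
    have hi: "h integrable_on {a..c n}" using normint(1)[OF order_refl ca _ sig hc hb, of n] tcpos[of n] by auto
    have "i (x n) = integral {a..c n} (i \<circ> h)" unfolding x_def by (rule integral_linear[OF hi bl, symmetric])
    also have "\<dots> = integral {a..c n} F"
      by (rule integral_cong) (use hF tcpos[of n] in auto)
    finally show ?thesis .
  qed
  have "(\<lambda>n. integral {a..c n} F) \<longlonglongrightarrow> integral {a..t} F"
    using continuous_on_tendsto_compose[OF indefinite_integral_continuous_1[OF Fi] ct] ca tcpos at
    by (simp add: less_imp_le)
  hence "(\<lambda>n. i (x n)) \<longlonglongrightarrow> y" using ix Fint by (simp add: integral_unique)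
  moreover have "(\<lambda>n. i (x n)) \<longlonglongrightarrow> i z"
    using bounded_linear.tendsto[OF bl xz] .
  ultimately have "i z = y" using LIMSEQ_unique by blast
  moreover have "norm z \<le> B * (t - a) powr \<sigma> / \<sigma>"
    using tendsto_norm[OF xz] xb by (intro LIMSEQ_le_const2) auto
  ultimately show ?thesis by blast
qed

lemma cont_by_bound:
  fixes f :: "real \<Rightarrow> 'a::real_normed_vector" and q :: "real \<Rightarrow> 'b::real_normed_vector"
  assumes fc: "continuous_on X f"
    and b: "\<And>x y. x \<in> X \<Longrightarrow> y \<in> X \<Longrightarrow> norm (q y - q x) \<le> L * norm (f y - f x) + M * \<bar>y - x\<bar>"
  shows "continuous_on X q"
  unfolding continuous_on_def
proof (intro ballI)
  fix x assume x: "x \<in> X"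
  have fx: "(f \<longlongrightarrow> f x) (at x within X)" using fc x continuous_on_def by blast
  have "((\<lambda>y. L * norm (f y - f x) + M * \<bar>y - x\<bar>) \<longlongrightarrow> L * norm (f x - f x) + M * \<bar>x - x\<bar>) (at x within X)"
    by (intro tendsto_intros fx)
  hence g0: "((\<lambda>y. L * norm (f y - f x) + M * \<bar>y - x\<bar>) \<longlongrightarrow> 0) (at x within X)" by simp
  have "((\<lambda>y. q y - q x) \<longlongrightarrow> 0) (at x within X)"
  proof (rule Lim_null_comparison[OF _ g0])
    show "\<forall>\<^sub>F y in at x within X. norm (q y - q x) \<le> L * norm (f y - f x) + M * \<bar>y - x\<bar>"
      unfolding eventually_at_filter using b x by (auto intro: always_eventually)
  qed
  thus "(q \<longlongrightarrow> q x) (at x within X)" by (rule LIM_zero_cancel)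
qed

theorem proposition2p5:
  fixes i :: "'f::banach \<Rightarrow> 'm::banach" and j :: "'p::banach \<Rightarrow> 'f"
    and A :: "'p \<Rightarrow> 'm" and S :: "real \<Rightarrow> 'm \<Rightarrow> 'm"
    and u um :: "real \<Rightarrow> real" and \<sigma> :: real
    and P :: "'f \<times> real \<Rightarrow> 'm" and Dom :: "('f \<times> real) set"
    and f0 :: 'f and t0 :: real and T T' :: ereal and \<phi> \<phi>' :: "real \<Rightarrow> 'f"
  assumes "P1 i j" and "P2 i j A" and "P3 i j A S" and "P4 i S u"
    and "P5 i S um \<sigma>" and "P6 P Dom"
    and "(f0, t0) \<in> Dom"
    and "VP_solution i S P Dom f0 t0 T \<phi>"
    and "VP_solution i S P Dom f0 t0 T' \<phi>'"
  shows "\<forall>t. t0 \<le> t \<and> ereal t < min T T' \<longrightarrow> \<phi> t = \<phi>' t"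
proof (intro allI impI)
  fix t1 assume t1: "t0 \<le> t1 \<and> ereal t1 < min T T'"
  have bl: "bounded_linear i" and inj: "inj i"
    using assms(1) unfolding P1_def dense_embedding_def by blast+
  have SG: "strongly_continuous_semigroup S" using assms(3) unfolding P3_def generates_def by blast+
  have Sbl: "\<And>t. t \<ge> 0 \<Longrightarrow> bounded_linear (S t)" and S0: "S 0 = id"
    using SG unfolding strongly_continuous_semigroup_def by blast+
  have P5r: "\<And>t x. t > 0 \<Longrightarrow> S t x \<in> range i"
    and P5c: "continuous_on (UNIV \<times> {0<..}) (\<lambda>(x, t). inv i (S t x))"
    and P5p: "\<And>t. t > 0 \<Longrightarrow> 0 < um t"
    and P5b: "\<And>t x. t > 0 \<Longrightarrow> norm (inv i (S t x)) \<le> um t * norm x"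
    and sig: "0 < \<sigma>"
    and umO: "um \<in> O[at_right 0](\<lambda>t. t powr (-(1 - \<sigma>)))"
    using assms(5) unfolding P5_def by simp_all
  have Lip: "\<And>C. closed C \<Longrightarrow> bounded C \<Longrightarrow> C \<subseteq> Dom \<Longrightarrow> (\<exists>L M. 0 \<le> L \<and> 0 \<le> M \<and>
           (\<forall>f t f' t'. (f, t) \<in> C \<longrightarrow> (f', t') \<in> C \<longrightarrow>
              norm (P (f, t) - P (f', t')) \<le> L * norm (f - f') + M * \<bar>t - t'\<bar>))"
    using assms(6) unfolding P6_def by (elim conjE) (rule allE, assumption, erule impE, blast, assumption)
  have V1: "continuous_on {t. t0 \<le> t \<and> ereal t < T} \<phi>"
    "\<And>t. t0 \<le> t \<and> ereal t < T \<Longrightarrow> (\<phi> t, t) \<in> Dom"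
    "\<And>t. t0 \<le> t \<and> ereal t < T \<Longrightarrow>
        ((\<lambda>s. S (t - s) (P (\<phi> s, s))) has_integral (i (\<phi> t) - S (t - t0) (i f0))) {t0..t}"
    using assms(8) unfolding VP_solution_def by simp_all
  have V2: "continuous_on {t. t0 \<le> t \<and> ereal t < T'} \<phi>'"
    "\<And>t. t0 \<le> t \<and> ereal t < T' \<Longrightarrow> (\<phi>' t, t) \<in> Dom"
    "\<And>t. t0 \<le> t \<and> ereal t < T' \<Longrightarrow>
        ((\<lambda>s. S (t - s) (P (\<phi>' s, s))) has_integral (i (\<phi>' t) - S (t - t0) (i f0))) {t0..t}"
    using assms(9) unfolding VP_solution_def by simp_all
  have inT: "t0 \<le> s \<and> ereal s < T" "t0 \<le> s \<and> ereal s < T'" if "s \<in> {t0..t1}" for s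
  proof -
    have st: "ereal s \<le> ereal t1" using that by simp
    have tt: "ereal t1 < T" "ereal t1 < T'" using t1 by simp_all
    have "ereal s < T" by (rule order.strict_trans1[OF st tt(1)])
    moreover have "ereal s < T'" by (rule order.strict_trans1[OF st tt(2)])
    moreover have "t0 \<le> s" using that by simp
    ultimately show "t0 \<le> s \<and> ereal s < T" "t0 \<le> s \<and> ereal s < T'" by simp_all
  qed
  have c1: "continuous_on {t0..t1} \<phi>" by (rule continuous_on_subset[OF V1(1)]) (use inT(1) in blast)
  have c2: "continuous_on {t0..t1} \<phi>'" by (rule continuous_on_subset[OF V2(1)]) (use inT(2) in blast)
  define C where "C = (\<lambda>s. (\<phi> s, s)) ` {t0..t1} \<union> (\<lambda>s. (\<phi>' s, s)) ` {t0..t1}"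
  have cpt: "compact C" unfolding C_def
    by (intro compact_Un compact_continuous_image continuous_on_Pair c1 c2 continuous_on_id compact_Icc)
  have CD: "C \<subseteq> Dom"
  proof
    fix z assume "z \<in> C"
    then obtain s where s: "s \<in> {t0..t1}" "z = (\<phi> s, s) \<or> z = (\<phi>' s, s)" unfolding C_def by blast
    show "z \<in> Dom" using s(2) V1(2)[OF inT(1)[OF s(1)]] V2(2)[OF inT(2)[OF s(1)]] by blast
  qed
  obtain L M where LM0: "0 \<le> L \<and> 0 \<le> M \<and>
           (\<forall>f t f' t'. (f, t) \<in> C \<longrightarrow> (f', t') \<in> C \<longrightarrow>
              norm (P (f, t) - P (f', t')) \<le> L * norm (f - f') + M * \<bar>t - t'\<bar>)"
    using Lip[OF compact_imp_closed[OF cpt] compact_imp_bounded[OF cpt] CD] by blast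
  have LM: "0 \<le> L" "0 \<le> M"
    "\<And>f t f' t'. (f, t) \<in> C \<Longrightarrow> (f', t') \<in> C \<Longrightarrow>
              norm (P (f, t) - P (f', t')) \<le> L * norm (f - f') + M * \<bar>t - t'\<bar>"
    using LM0 by simp_all
  have inC: "(\<phi> s, s) \<in> C" "(\<phi>' s, s) \<in> C" if "s \<in> {t0..t1}" for s
    using that unfolding C_def by auto
  define d where "d = (\<lambda>s. \<phi> s - \<phi>' s)"
  define g where "g = (\<lambda>s. P (\<phi> s, s) - P (\<phi>' s, s))"
  have gb: "norm (g s) \<le> L * norm (d s)" if "s \<in> {t0..t1}" for s
    using LM(3)[OF inC(1)[OF that] inC(2)[OF that]] unfolding g_def d_def by simp
  have q1: "continuous_on {t0..t1} (\<lambda>s. P (\<phi> s, s))"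
    by (rule cont_by_bound[OF c1, of _ L M], rule LM(3)[OF inC(1) inC(1)], assumption+)
  have q2: "continuous_on {t0..t1} (\<lambda>s. P (\<phi>' s, s))"
    by (rule cont_by_bound[OF c2, of _ L M], rule LM(3)[OF inC(2) inC(2)], assumption+)
  have gc: "continuous_on {t0..t1} g" unfolding g_def by (intro continuous_on_diff q1 q2)
  have dc: "continuous_on {t0..t1} d" unfolding d_def by (intro continuous_on_diff c1 c2)
  have gint: "((\<lambda>s. S (t - s) (g s)) has_integral i (d t)) {t0..t}" if "t \<in> {t0..t1}" for t
  proof -
    have "((\<lambda>s. S (t - s) (P (\<phi> s, s)) - S (t - s) (P (\<phi>' s, s))) has_integral
       (i (\<phi> t) - S (t - t0) (i f0)) - (i (\<phi>' t) - S (t - t0) (i f0))) {t0..t}"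
      by (intro has_integral_diff V1(3) V2(3) inT that)
    moreover have "(i (\<phi> t) - S (t - t0) (i f0)) - (i (\<phi>' t) - S (t - t0) (i f0)) = i (d t)"
      unfolding d_def using linear_diff[OF bounded_linear.linear[OF bl]] by simp
    ultimately have I: "((\<lambda>s. S (t - s) (P (\<phi> s, s)) - S (t - s) (P (\<phi>' s, s))) has_integral i (d t)) {t0..t}"
      by simp
    have E: "S (t - s) (P (\<phi> s, s)) - S (t - s) (P (\<phi>' s, s)) = S (t - s) (g s)" if "s \<in> {t0..t}" for s
    proof -
      have "t - s \<ge> 0" using that by simp
      from linear_diff[OF bounded_linear.linear[OF Sbl[OF this]]] show ?thesis unfolding g_def by simp
    qed
    show ?thesis by (rule has_integral_cong[THEN iffD1, OF E I]) assumption
  qed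
  obtain K where K: "K > 0" "eventually (\<lambda>x. norm (um x) \<le> K * norm (x powr (-(1 - \<sigma>)))) (at_right 0)"
    using landau_o.bigE[OF umO] by blast
  obtain r0 where r0: "r0 > 0" "\<And>y. y > 0 \<Longrightarrow> y < r0 \<Longrightarrow> norm (um y) \<le> K * norm (y powr (-(1 - \<sigma>)))"
    using K(2) unfolding eventually_at_right_field by auto
  have umb: "um y \<le> K * y powr (\<sigma> - 1)" if "y > 0" "y < r0" for y
    using r0(2)[OF that] by simp
  have "((\<lambda>x. L * K * (x powr \<sigma>) / \<sigma>) \<longlongrightarrow> L * K * (0 powr \<sigma>) / \<sigma>) (at_right 0)"
    using sig by (intro tendsto_intros) (auto simp: eventually_at_right_field intro: exI[of _ 1])
  hence "eventually (\<lambda>x. L * K * (x powr \<sigma>) / \<sigma> < 1) (at_right 0)"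
    using sig by (intro order_tendstoD) auto
  then obtain b where b: "b > 0" "\<And>y. y > 0 \<Longrightarrow> y < b \<Longrightarrow> L * K * (y powr \<sigma>) / \<sigma> < 1"
    unfolding eventually_at_right_field by auto
  define \<delta> where "\<delta> = min (b / 2) (r0 / 2)"
  have dpos: "\<delta> > 0" and dr0: "\<delta> < r0" and dsmall: "L * K * (\<delta> powr \<sigma>) / \<sigma> < 1"
    unfolding \<delta>_def using b r0 by auto
  have t0I: "t0 \<in> {t0..t1}" using t1 by auto
  have phi0: "\<phi> t0 = f0" and phi0': "\<phi>' t0 = f0"
  proof -
    have X: "((\<lambda>s. S (t0 - s) (P (\<phi> s, s))) has_integral (i (\<phi> t0) - S (t0 - t0) (i f0))) {t0}"
      using V1(3)[OF inT(1)[OF t0I]] by simp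
    have "i (\<phi> t0) - S (t0 - t0) (i f0) = 0"
      using has_integral_unique[OF X has_integral_refl(2)] .
    hence "i (\<phi> t0) = i f0" using S0 by simp
    thus "\<phi> t0 = f0" using inj by (simp add: inj_eq)
    have X': "((\<lambda>s. S (t0 - s) (P (\<phi>' s, s))) has_integral (i (\<phi>' t0) - S (t0 - t0) (i f0))) {t0}"
      using V2(3)[OF inT(2)[OF t0I]] by simp
    have "i (\<phi>' t0) - S (t0 - t0) (i f0) = 0"
      using has_integral_unique[OF X' has_integral_refl(2)] .
    hence "i (\<phi>' t0) = i f0" using S0 by simp
    thus "\<phi>' t0 = f0" using inj by (simp add: inj_eq)
  qed
  have Q: "\<forall>s. t0 \<le> s \<and> s \<le> min t1 (t0 + real n * \<delta>) \<longrightarrow> d s = 0" for n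
  proof (induction n)
    case 0
    then show ?case using phi0 phi0' t1 by (auto simp: d_def)
  next
    case (Suc n)
    define a where "a = min t1 (t0 + real n * \<delta>)"
    define bb where "bb = min t1 (t0 + real (Suc n) * \<delta>)"
    have IH: "\<And>s. t0 \<le> s \<Longrightarrow> s \<le> a \<Longrightarrow> d s = 0" using Suc.IH unfolding a_def by auto
    have a0: "t0 \<le> a" unfolding a_def using t1 dpos by auto
    have abb: "a \<le> bb" "bb - a \<le> \<delta>" "bb \<le> t1" unfolding a_def bb_def using dpos
      by (auto simp: algebra_simps)
    have claim: "d s = 0" if s: "s \<in> {a..bb}" for s
    proof -
      have sub: "{a..bb} \<subseteq> {t0..t1}" using abb a0 by auto
      have "\<exists>x\<in>{a..bb}. \<forall>y\<in>{a..bb}. norm (d y) \<le> norm (d x)"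
        by (rule continuous_attains_sup[OF compact_Icc]) (use abb(1) continuous_on_norm[OF continuous_on_subset[OF dc sub]] in simp_all)
      then obtain tm where tm: "tm \<in> {a..bb}" "\<And>y. y \<in> {a..bb} \<Longrightarrow> norm (d y) \<le> norm (d tm)"
        by blast
      define D where "D = norm (d tm)"
      show ?thesis
      proof (rule ccontr)
        assume "d s \<noteq> 0"
        hence "norm (d s) > 0" by simp
        hence "D > 0" using tm(2)[OF s] unfolding D_def by linarith
        have "d a = 0" using IH[OF a0] by simp
        hence "tm \<noteq> a" using \<open>D > 0\<close> unfolding D_def by auto
        hence atm: "a < tm" using tm(1) by simp
        have tmI: "tm \<in> {t0..t1}" using tm(1) a0 abb by auto
        define F where "F = (\<lambda>s. S (tm - s) (g s))"
        define h where "h = (\<lambda>s. inv i (S (tm - s) (g s)))"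
        have Ft: "(F has_integral i (d tm)) {t0..tm}" unfolding F_def using gint[OF tmI] .
        have F0: "(F has_integral 0) {t0..a}"
        proof (rule has_integral_is_0)
          fix x assume x: "x \<in> {t0..a}"
          hence "d x = 0" using IH by auto
          hence "g x = 0" unfolding g_def d_def by simp
          moreover have "tm - x \<ge> 0" using x atm by auto
          ultimately show "F x = 0" unfolding F_def using linear_0[OF bounded_linear.linear[OF Sbl]] by simp
        qed
        have Fi: "F integrable_on {a..tm}"
          by (rule integrable_subinterval_real[OF has_integral_integrable[OF Ft]]) (use a0 in auto)
        have "(F has_integral 0 + integral {a..tm} F) {t0..tm}"
          by (rule has_integral_combine[OF a0 less_imp_le[OF atm] F0 integrable_integral[OF Fi]])
        hence "integral {a..tm} F = i (d tm)" using has_integral_unique[OF _ Ft] by simp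
        hence Fint: "(F has_integral i (d tm)) {a..tm}" using integrable_integral[OF Fi] by simp
        have hc: "continuous_on {a..<tm} h"
        proof -
          have sub2: "{a..<tm} \<subseteq> {t0..t1}" using a0 tmI by auto
          have c1: "continuous_on {a..<tm} (\<lambda>s. (g s, tm - s))"
            by (intro continuous_on_Pair continuous_on_subset[OF gc sub2] continuous_intros)
          have img: "(\<lambda>s. (g s, tm - s)) ` {a..<tm} \<subseteq> UNIV \<times> {0<..}" by auto
          have "continuous_on {a..<tm} ((\<lambda>(x, t). inv i (S t x)) \<circ> (\<lambda>s. (g s, tm - s)))"
            by (rule continuous_on_compose[OF c1 continuous_on_subset[OF P5c img]])
          thus ?thesis unfolding h_def by (simp add: o_def)
        qed
        have hF: "i (h s) = F s" if "s \<in> {a..<tm}" for s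
          unfolding h_def F_def using P5r[of "tm - s"] that by (simp add: f_inv_into_f)
        have hb: "norm (h s) \<le> (L * K * D) * (tm - s) powr (\<sigma> - 1)" if "s \<in> {a..<tm}" for s
        proof -
          have sI: "s \<in> {t0..t1}" using that a0 tmI by auto
          have pos: "tm - s > 0" "tm - s < r0" using that tm(1) abb dr0 by auto
          have "norm (h s) \<le> um (tm - s) * norm (g s)" unfolding h_def using P5b[OF pos(1)] by simp
          also have "\<dots> \<le> (K * (tm - s) powr (\<sigma> - 1)) * (L * D)"
          proof (rule mult_mono)
            show "um (tm - s) \<le> K * (tm - s) powr (\<sigma> - 1)" using umb pos by auto
            have "norm (d s) \<le> D" unfolding D_def using tm(2) that tm(1) by auto
            thus "norm (g s) \<le> L * D" using gb[OF sI] LM(1) by (meson mult_left_mono order_trans)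
          qed (use K(1) in auto)
          finally show ?thesis by (simp add: algebra_simps)
        qed
        obtain x where x: "i x = i (d tm)" "norm x \<le> (L * K * D) * (tm - a) powr \<sigma> / \<sigma>"
        proof -
          have B0: "0 \<le> L * K * D" using LM(1) K(1) \<open>D > 0\<close> by simp
          show ?thesis using core[OF bl inj atm sig B0 Fint hc hF hb] that by blast
        qed
        have "x = d tm" using x(1) inj by (simp add: inj_eq)
        hence "D \<le> (L * K * D) * (tm - a) powr \<sigma> / \<sigma>" using x(2) unfolding D_def by simp
        also have "\<dots> \<le> (L * K * D) * \<delta> powr \<sigma> / \<sigma>"
        proof -
          have B0: "0 \<le> L * K * D" using LM(1) K(1) \<open>D > 0\<close> by simp
          have "tm - a \<le> \<delta>" using tm(1) abb(2) by simp
          hence "(tm - a) powr \<sigma> \<le> \<delta> powr \<sigma>"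
            by (rule powr_mono2[rotated 2]) (use sig atm in simp_all)
          hence "(L * K * D) * (tm - a) powr \<sigma> \<le> (L * K * D) * \<delta> powr \<sigma>"
            by (rule mult_left_mono[OF _ B0])
          thus ?thesis by (rule divide_right_mono) (use sig in simp)
        qed
        also have "\<dots> = D * (L * K * (\<delta> powr \<sigma>) / \<sigma>)" by (simp add: algebra_simps)
        also have "\<dots> < D * 1" by (rule mult_strict_left_mono[OF dsmall \<open>D > 0\<close>])
        finally show False by simp
      qed
    qed
    show ?case
    proof (intro allI impI)
      fix s assume "t0 \<le> s \<and> s \<le> min t1 (t0 + real (Suc n) * \<delta>)"
      hence H: "t0 \<le> s" "s \<le> bb" unfolding bb_def by simp_all
      show "d s = 0"
      proof (cases "s \<le> a")
        case True thus ?thesis using IH H(1) by simp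
      next
        case False thus ?thesis using claim H(2) by simp
      qed
    qed
  qed
  obtain n where n: "(t1 - t0) / \<delta> \<le> real n" using real_arch_simple by blast
  hence "t1 - t0 \<le> real n * \<delta>" using dpos by (simp add: divide_le_eq)
  hence "d t1 = 0" using Q[of n] t1 by auto
  thus "\<phi> t1 = \<phi>' t1" unfolding d_def by simp
qed

end
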